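(* Let $M$ and $N$ be monoids with finite generating sets $X$ and $Y$ respectively, and suppose $(M,d_X)$ and $(N,d_Y)$ are quasi-isometric. Then $M$ (with respect to $X$) and $N$ (with respect to $Y$) have the same number of ends.
   Context: For a monoid $M$ generated by a finite set $X$, $d_X(x,y)=\inf\{|w|:w\in X^*,\ xw=y\}$ ($X^*$ the free monoid on $X$, $\inf\emptyset=\infty$). A map $f:(M,d_X)\to(N,d_Y)$ is a quasi-isometry if there are $1\le\lambda<\infty$, $0<\epsilon<\infty$, $0\le\mu<\infty$ with $\frac1\lambda d_X(x,y)-\epsilon\le d_Y(f(x),f(y))\le\lambda d_X(x,y)+\epsilon$ for all $x,y\in M$, and for every $n\in N$ some $x\in M$ with $\max(d_Y(n,f(x)),d_Y(f(x),n))\le\mu$. The right Cayley graph of $M$ with respect to $X$ is the directed graph with vertex set $M$ and an edge labelled $a$ from $m$ to $ma$ for each $m\in M$, $a\in X$. The number of ends of $M$ with respect to $X$ is the supremum, over all finite sets $F$ of vertices, of the number of infinite connected components of the graph obtained from the underlying undirected graph of the right Cayley graph by deleting $F$. *)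

theory Defs
  imports Main "HOL-Library.Extended_Real"
begin

text \<open>Monoids are modelled as types of class monoid_mult (the monoid is the whole type).
  Words over X are lists with entries in X, evaluated by prod_list.\<close>

definition generates :: "'a::monoid_mult set \<Rightarrow> bool" where
  "generates X \<longleftrightarrow> (\<forall>m::'a. \<exists>w. set w \<subseteq> X \<and> prod_list w = m)"

definition wdist :: "'a::monoid_mult set \<Rightarrow> 'a \<Rightarrow> 'a \<Rightarrow> enat" where
  "wdist X x y = Inf {enat (length w) | w. set w \<subseteq> X \<and> x * prod_list w = y}"

definition quasi_isometry ::
  "'a::monoid_mult set \<Rightarrow> 'b::monoid_mult set \<Rightarrow> ('a \<Rightarrow> 'b) \<Rightarrow> bool" where
  "quasi_isometry X Y f \<longleftrightarrow>
     (\<exists>lam eps mu :: real. 1 \<le> lam \<and> 0 < eps \<and> 0 \<le> mu \<and>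
       (\<forall>x y. ereal (1 / lam) * ereal_of_enat (wdist X x y) - ereal eps
                 \<le> ereal_of_enat (wdist Y (f x) (f y))
             \<and> ereal_of_enat (wdist Y (f x) (f y))
                 \<le> ereal lam * ereal_of_enat (wdist X x y) + ereal eps) \<and>
       (\<forall>n. \<exists>x. max (ereal_of_enat (wdist Y n (f x))) (ereal_of_enat (wdist Y (f x) n))
                  \<le> ereal mu))"

definition quasi_isometric :: "'a::monoid_mult set \<Rightarrow> 'b::monoid_mult set \<Rightarrow> bool" where
  "quasi_isometric X Y \<longleftrightarrow> (\<exists>f. quasi_isometry X Y f)"

text \<open>Underlying undirected graph of the right Cayley graph with the vertex set F deleted.\<close>
definition cayley_edges_minus :: "'a::monoid_mult set \<Rightarrow> 'a set \<Rightarrow> ('a \<times> 'a) set" where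
  "cayley_edges_minus X F =
     {(u, v). u \<notin> F \<and> v \<notin> F \<and> (\<exists>a\<in>X. v = u * a \<or> u = v * a)}"

definition components_minus :: "'a::monoid_mult set \<Rightarrow> 'a set \<Rightarrow> 'a set set" where
  "components_minus X F = {{v. (m, v) \<in> (cayley_edges_minus X F)\<^sup>*} | m. m \<notin> F}"

definition num_inf_components :: "'a::monoid_mult set \<Rightarrow> 'a set \<Rightarrow> enat" where
  "num_inf_components X F =
     (let S = {C \<in> components_minus X F. infinite C} in
      if finite S then enat (card S) else \<infinity>)"

definition num_ends :: "'a::monoid_mult set \<Rightarrow> enat" where
  "num_ends X = (SUP F \<in> {F :: 'a set. finite F}. num_inf_components X F)"

end

theory Submission
  imports Defs
begin

definition reach :: "'a::monoid_mult set \<Rightarrow> 'a \<Rightarrow> 'a \<Rightarrow> nat \<Rightarrow> bool" where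
  "reach X x y r \<longleftrightarrow> (\<exists>w. set w \<subseteq> X \<and> length w \<le> r \<and> y = x * prod_list w)"

lemma reach_refl: "reach X x x r"
  unfolding reach_def by (rule exI[of _ "[]"]) simp

lemma reach_mono: "reach X x y r \<Longrightarrow> r \<le> s \<Longrightarrow> reach X x y s"
  unfolding reach_def by (blast intro: order_trans)

lemma reach_trans: "reach X x y r \<Longrightarrow> reach X y z s \<Longrightarrow> reach X x z (r+s)"
proof -
  assume "reach X x y r" "reach X y z s"
  then obtain w v where "set w \<subseteq> X" "length w \<le> r" "y = x * prod_list w"
     "set v \<subseteq> X" "length v \<le> s" "z = y * prod_list v" unfolding reach_def by blast
  then show ?thesis unfolding reach_def by (intro exI[of _ "w@v"]) (auto simp: mult.assoc)
qed

lemma reach_gen: "a \<in> X \<Longrightarrow> reach X x (x*a) 1"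
  unfolding reach_def by (intro exI[of _ "[a]"]) simp

definition oball :: "'a::monoid_mult set \<Rightarrow> 'a set \<Rightarrow> nat \<Rightarrow> 'a set" where
  "oball X S r = {y. \<exists>x\<in>S. reach X x y r}"

lemma finite_oball: "finite X \<Longrightarrow> finite S \<Longrightarrow> finite (oball X S r)"
proof -
  assume "finite X" "finite S"
  have "oball X S r \<subseteq> (\<lambda>(x,w). x * prod_list w) ` (S \<times> {w. set w \<subseteq> X \<and> length w \<le> r})"
    unfolding oball_def reach_def by force
  moreover have "finite (S \<times> {w. set w \<subseteq> X \<and> length w \<le> r})"
    using \<open>finite X\<close> \<open>finite S\<close> finite_lists_length_le by blast
  ultimately show ?thesis by (meson finite_surj)
qed

lemma oball_sub: "S \<subseteq> oball X S r"
  unfolding oball_def using reach_refl by blast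

lemma oballI: "x \<in> S \<Longrightarrow> reach X x y r \<Longrightarrow> y \<in> oball X S r"
  unfolding oball_def by blast

fun pts :: "'a::monoid_mult \<Rightarrow> 'a list \<Rightarrow> 'a set" where
  "pts x [] = {x}" | "pts x (a#w) = insert x (pts (x*a) w)"

lemma pts_split: "t \<in> pts x w \<Longrightarrow> \<exists>w1 w2. w = w1@w2 \<and> t = x * prod_list w1"
proof (induction w arbitrary: x)
  case Nil then show ?case by (intro exI[of _ "[]"]) simp
next
  case (Cons a w)
  show ?case
  proof (cases "t = x")
    case True then show ?thesis by (intro exI[of _ "[]"] exI[of _ "a#w"]) simp
  next
    case False
    then have "t \<in> pts (x*a) w" using Cons.prems by simp
    from Cons.IH[OF this] obtain w1 w2 where "w = w1@w2" "t = x*a*prod_list w1" by blast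
    then show ?thesis by (intro exI[of _ "a#w1"] exI[of _ w2]) (simp add: mult.assoc)
  qed
qed

lemma start_pts: "x \<in> pts x w" by (cases w) auto

lemma edges_sym: "sym (cayley_edges_minus X F)"
  unfolding sym_def cayley_edges_minus_def by auto

lemma rt_sym: "(x,y) \<in> (cayley_edges_minus X F)\<^sup>* \<Longrightarrow> (y,x) \<in> (cayley_edges_minus X F)\<^sup>*"
  using sym_rtrancl[OF edges_sym] by (meson symD)

lemma pts_path: "set w \<subseteq> X \<Longrightarrow> pts x w \<inter> F = {} \<Longrightarrow> (x, x * prod_list w) \<in> (cayley_edges_minus X F)\<^sup>*"
proof (induction w arbitrary: x)
  case Nil then show ?case by simp
next
  case (Cons a w)
  have "x \<notin> F" using Cons.prems by simp
  moreover have "x*a \<notin> F" using Cons.prems start_pts[of "x*a" w] by auto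
  ultimately have e: "(x, x*a) \<in> cayley_edges_minus X F"
    using Cons.prems unfolding cayley_edges_minus_def by auto
  have "(x*a, x*a*prod_list w) \<in> (cayley_edges_minus X F)\<^sup>*"
    using Cons by auto
  then show ?case using e by (simp add: mult.assoc converse_rtrancl_into_rtrancl)
qed

lemma reach_path:
  assumes "reach X x y r" and "\<And>t. reach X x t r \<Longrightarrow> reach X t y r \<Longrightarrow> t \<notin> F"
  shows "(x,y) \<in> (cayley_edges_minus X F)\<^sup>*"
proof -
  obtain w where w: "set w \<subseteq> X" "length w \<le> r" "y = x * prod_list w"
    using assms(1) unfolding reach_def by blast
  have "pts x w \<inter> F = {}"
  proof (rule ccontr)
    assume "pts x w \<inter> F \<noteq> {}"
    then obtain t where t: "t \<in> pts x w" "t \<in> F" by blast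
    obtain w1 w2 where ww: "w = w1@w2" "t = x * prod_list w1" using pts_split[OF t(1)] by blast
    have "reach X x t r" unfolding reach_def using w ww by (intro exI[of _ w1]) auto
    moreover have "reach X t y r" unfolding reach_def using w ww
      by (intro exI[of _ w2]) (auto simp: mult.assoc)
    ultimately show False using assms(2) t(2) by blast
  qed
  then show ?thesis using pts_path w by blast
qed

definition ccomp :: "'a::monoid_mult set \<Rightarrow> 'a set \<Rightarrow> 'a \<Rightarrow> 'a set" where
  "ccomp X F m = {v. (m,v) \<in> (cayley_edges_minus X F)\<^sup>*}"

lemma components_alt: "C \<in> components_minus X F \<longleftrightarrow> (\<exists>m. m \<notin> F \<and> C = ccomp X F m)"
  unfolding components_minus_def ccomp_def by auto

lemma ccomp_eq: "(p,q) \<in> (cayley_edges_minus X F)\<^sup>* \<Longrightarrow> ccomp X F p = ccomp X F q"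
  unfolding ccomp_def using rt_sym by (blast intro: rtrancl_trans)

lemma ccomp_self: "m \<in> ccomp X F m" unfolding ccomp_def by simp

lemma rt_notin: "(p,q) \<in> (cayley_edges_minus X G)\<^sup>* \<Longrightarrow> q \<notin> G \<Longrightarrow> p \<notin> G"
  by (erule converse_rtranclE) (auto simp: cayley_edges_minus_def)

lemma last_exit:
  "set w \<subseteq> X \<Longrightarrow> x * prod_list w \<notin> G \<Longrightarrow>
    (x, x*prod_list w) \<in> (cayley_edges_minus X G)\<^sup>* \<or>
    (\<exists>u\<in>G. \<exists>a\<in>X. (u*a, x*prod_list w) \<in> (cayley_edges_minus X G)\<^sup>*)"
proof (induction w arbitrary: x)
  case Nil then show ?case by simp
next
  case (Cons a w)
  have eq: "x * prod_list (a#w) = x*a*prod_list w" by (simp add: mult.assoc)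
  have "(x*a, x*a*prod_list w) \<in> (cayley_edges_minus X G)\<^sup>* \<or>
    (\<exists>u\<in>G. \<exists>b\<in>X. (u*b, x*a*prod_list w) \<in> (cayley_edges_minus X G)\<^sup>*)"
    using Cons.IH[of "x*a"] Cons.prems by (simp add: mult.assoc)
  then show ?case
  proof
    assume h: "(x*a, x*a*prod_list w) \<in> (cayley_edges_minus X G)\<^sup>*"
    show ?thesis
    proof (cases "x \<in> G")
      case True then show ?thesis using h eq Cons.prems by auto
    next
      case False
      have "x*a \<notin> G" using rt_notin[OF h] Cons.prems eq by simp
      then have "(x, x*a) \<in> cayley_edges_minus X G" using False Cons.prems
        unfolding cayley_edges_minus_def by auto
      then show ?thesis using h eq by (simp add: converse_rtrancl_into_rtrancl)
    qed
  next
    assume "\<exists>u\<in>G. \<exists>b\<in>X. (u*b, x*a*prod_list w) \<in> (cayley_edges_minus X G)\<^sup>*"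
    then show ?thesis using eq by simp
  qed
qed

lemma finite_components:
  assumes "finite X" "generates X" "finite G"
  shows "finite (components_minus X G)"
proof -
  have "components_minus X G \<subseteq> insert (ccomp X G 1) ((\<lambda>(u,a). ccomp X G (u*a)) ` (G \<times> X))"
  proof
    fix C assume "C \<in> components_minus X G"
    then obtain m where m: "m \<notin> G" "C = ccomp X G m" using components_alt by blast
    obtain w where w: "set w \<subseteq> X" "prod_list w = m" using assms(2) unfolding generates_def by blast
    from last_exit[of w X 1 G] w m
    have "(1, m) \<in> (cayley_edges_minus X G)\<^sup>* \<or> (\<exists>u\<in>G. \<exists>a\<in>X. (u*a, m) \<in> (cayley_edges_minus X G)\<^sup>*)"
      by simp
    then show "C \<in> insert (ccomp X G 1) ((\<lambda>(u,a). ccomp X G (u*a)) ` (G \<times> X))"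
      using m ccomp_eq by fastforce
  qed
  then show ?thesis using assms by (meson finite_SigmaI finite_imageI finite_insert finite_subset)
qed

lemma refine:
  assumes "finite X" "generates X" "F \<subseteq> G" "finite G"
    and "C \<in> components_minus X F" "infinite C"
  shows "\<exists>x\<in>C. x \<notin> G \<and> infinite (ccomp X G x)"
proof (rule ccontr)
  assume na: "\<not> ?thesis"
  have "C \<subseteq> G \<union> \<Union>{ccomp X G x | x. x \<in> C \<and> x \<notin> G}"
    using ccomp_self by blast
  moreover have "{ccomp X G x | x. x \<in> C \<and> x \<notin> G} \<subseteq> components_minus X G"
    using components_alt by blast
  then have "finite {ccomp X G x | x. x \<in> C \<and> x \<notin> G}"
    using finite_components[OF assms(1,2,4)] finite_subset by blast
  moreover have "\<forall>S\<in>{ccomp X G x | x. x \<in> C \<and> x \<notin> G}. finite S" using na by blast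
  ultimately have "finite C" using assms(4) by (meson finite_Union finite_UnI finite_subset)
  then show False using assms(6) by blast
qed


lemma lip:
  assumes H1: "\<And>x a. a \<in> X \<Longrightarrow> reach Y (f x) (f (x*a)) K"
  shows "reach X p q r \<Longrightarrow> reach Y (f p) (f q) (K*r)"
proof -
  assume "reach X p q r"
  then obtain w where w: "set w \<subseteq> X" "length w \<le> r" "q = p * prod_list w"
    unfolding reach_def by blast
  have "reach Y (f p) (f (p * prod_list w)) (K * length w)" using w(1)
  proof (induction w arbitrary: p)
    case Nil then show ?case by (simp add: reach_refl)
  next
    case (Cons a w)
    have "reach Y (f p) (f (p*a)) K" using H1 Cons.prems by simp
    moreover have "reach Y (f (p*a)) (f (p*a*prod_list w)) (K * length w)" using Cons by simp
    ultimately have "reach Y (f p) (f (p*a*prod_list w)) (K + K * length w)" by (rule reach_trans)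
    then show ?case by (simp add: mult.assoc)
  qed
  then show ?thesis using w reach_mono by (metis mult_le_mono2)
qed

lemma core:
  fixes X :: "'a::monoid_mult set" and Y :: "'b::monoid_mult set"
    and f :: "'a \<Rightarrow> 'b" and g :: "'b \<Rightarrow> 'a"
  assumes fX: "finite X" and gX: "generates X" and fY: "finite Y"
    and H1: "\<And>x a. a \<in> X \<Longrightarrow> reach Y (f x) (f (x*a)) K"
    and H2: "\<And>n b. b \<in> Y \<Longrightarrow> reach X (g n) (g (n*b)) K"
    and H3a: "\<And>x. reach X x (g (f x)) K" and H3b: "\<And>x. reach X (g (f x)) x K"
    and H4: "\<And>n. reach Y (f (g n)) n K"
  shows "num_ends X \<le> num_ends Y"
proof -
  have fib: "finite {x. f x \<in> S}" if "finite S" for S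
  proof -
    have "{x. f x \<in> S} \<subseteq> oball X (g ` S) K"
      using H3b unfolding oball_def by blast
    then show ?thesis using finite_oball[OF fX] that by (meson finite_imageI finite_subset)
  qed
  have main: "num_inf_components X F \<le> num_inf_components Y (oball Y (f`F) (K*K+K))"
    if fF: "finite F" for F
  proof -
    define F' where "F' = oball Y (f ` F) (K*K+K)"
    define G where "G = oball X F (K+K) \<union> {x. f x \<in> oball Y F' K}"
    have fF': "finite F'" unfolding F'_def using finite_oball[OF fY] fF by blast
    have fG: "finite G" unfolding G_def using finite_oball[OF fX fF] fib finite_oball[OF fY fF'] by blast
    have FG: "F \<subseteq> G" unfolding G_def using oball_sub by blast
    have push: "(f p, f q) \<in> (cayley_edges_minus Y F')\<^sup>*"
      if "(p,q) \<in> (cayley_edges_minus X G)\<^sup>*" for p q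
      using that
    proof (induction rule: rtrancl_induct)
      case base then show ?case by simp
    next
      case (step q z)
      from step.hyps(2) obtain a where a: "q \<notin> G" "z \<notin> G" "a \<in> X" "z = q*a \<or> q = z*a"
        unfolding cayley_edges_minus_def by blast
      have "(f q, f z) \<in> (cayley_edges_minus Y F')\<^sup>*"
      proof (cases "z = q*a")
        case True
        have r: "reach Y (f q) (f z) K" using H1[OF a(3)] True by simp
        show ?thesis
        proof (rule reach_path[OF r])
          fix t assume "reach Y (f q) t K" "reach Y t (f z) K"
          show "t \<notin> F'"
          proof
            assume "t \<in> F'"
            then have "f z \<in> oball Y F' K" using oballI \<open>reach Y t (f z) K\<close> by blast
            then show False using a(2) unfolding G_def by blast
          qed
        qed
      next
        case False
        then have qa: "q = z*a" using a by blast
        have r: "reach Y (f z) (f q) K" using H1[OF a(3)] qa by simp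
        have "(f z, f q) \<in> (cayley_edges_minus Y F')\<^sup>*"
        proof (rule reach_path[OF r])
          fix t assume "reach Y (f z) t K" "reach Y t (f q) K"
          show "t \<notin> F'"
          proof
            assume "t \<in> F'"
            then have "f q \<in> oball Y F' K" using oballI \<open>reach Y t (f q) K\<close> by blast
            then show False using a(1) unfolding G_def by blast
          qed
        qed
        then show ?thesis by (rule rt_sym)
      qed
      then show ?case using step.IH by (rule rtrancl_trans[rotated])
    qed
    have pull: "(g n, g n') \<in> (cayley_edges_minus X F)\<^sup>*"
      if "(n,n') \<in> (cayley_edges_minus Y F')\<^sup>*" for n n'
      using that
    proof (induction rule: rtrancl_induct)
      case base then show ?case by simp
    next
      case (step q z)
      from step.hyps(2) obtain b where b: "q \<notin> F'" "z \<notin> F'" "b \<in> Y" "z = q*b \<or> q = z*b"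
        unfolding cayley_edges_minus_def by blast
      have key: "u \<in> F'" if "reach X t (g u) K" "t \<in> F" for t u
      proof -
        have "reach Y (f t) (f (g u)) (K*K)" using lip[OF H1] that(1) by blast
        then have "reach Y (f t) u (K*K+K)" using H4 reach_trans by blast
        then show ?thesis unfolding F'_def using that(2) oballI by blast
      qed
      have "(g q, g z) \<in> (cayley_edges_minus X F)\<^sup>*"
      proof (cases "z = q*b")
        case True
        have r: "reach X (g q) (g z) K" using H2[OF b(3)] True by simp
        show ?thesis
          by (rule reach_path[OF r]) (use key b(2) in blast)
      next
        case False
        then have qb: "q = z*b" using b by blast
        have r: "reach X (g z) (g q) K" using H2[OF b(3)] qb by simp
        have "(g z, g q) \<in> (cayley_edges_minus X F)\<^sup>*"
          by (rule reach_path[OF r]) (use key b(1) in blast)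
        then show ?thesis by (rule rt_sym)
      qed
      then show ?case using step.IH by (rule rtrancl_trans[rotated])
    qed
    have conn1: "(x, g (f x)) \<in> (cayley_edges_minus X F)\<^sup>*" if "x \<notin> G" for x
    proof (rule reach_path[OF H3a])
      fix t assume "reach X x t K" "reach X t (g (f x)) K"
      then have "reach X t x (K+K)" using H3b reach_trans by blast
      then show "t \<notin> F" using that unfolding G_def using oballI by blast
    qed
    have conn2: "(g (f x), x) \<in> (cayley_edges_minus X F)\<^sup>*" if "x \<notin> G" for x
    proof (rule reach_path[OF H3b])
      fix t assume "reach X t x K"
      then have "reach X t x (K+K)" using reach_mono by fastforce
      then show "t \<notin> F" using that unfolding G_def using oballI by blast
    qed
    define SM where "SM = {C \<in> components_minus X F. infinite C}"
    define SN where "SN = {C \<in> components_minus Y F'. infinite C}"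
    define xc where "xc C = (SOME x. x \<in> C \<and> x \<notin> G \<and> infinite (ccomp X G x))" for C
    define phi where "phi C = ccomp Y F' (f (xc C))" for C
    have xc: "xc C \<in> C \<and> xc C \<notin> G \<and> infinite (ccomp X G (xc C))" if "C \<in> SM" for C
    proof -
      have "\<exists>x. x \<in> C \<and> x \<notin> G \<and> infinite (ccomp X G x)"
        using refine[OF fX gX FG fG] that unfolding SM_def by blast
      then show ?thesis unfolding xc_def by (rule someI_ex)
    qed
    have phiN: "phi C \<in> SN" if "C \<in> SM" for C
    proof -
      have x: "xc C \<notin> G" "infinite (ccomp X G (xc C))" using xc[OF that] by auto
      have "f (xc C) \<notin> F'" using x(1) oball_sub unfolding G_def by blast
      then have "phi C \<in> components_minus Y F'" unfolding phi_def using components_alt by blast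
      moreover have "f ` ccomp X G (xc C) \<subseteq> phi C"
        unfolding phi_def ccomp_def using push by blast
      moreover have "infinite (f ` ccomp X G (xc C))"
      proof
        assume "finite (f ` ccomp X G (xc C))"
        then have "finite {x. f x \<in> f ` ccomp X G (xc C)}" by (rule fib)
        moreover have "ccomp X G (xc C) \<subseteq> {x. f x \<in> f ` ccomp X G (xc C)}" by blast
        ultimately show False using x(2) finite_subset by blast
      qed
      ultimately show ?thesis unfolding SN_def using finite_subset by blast
    qed
    have inj: "inj_on phi SM"
    proof (rule inj_onI)
      fix C1 C2 assume c: "C1 \<in> SM" "C2 \<in> SM" "phi C1 = phi C2"
      have x1: "xc C1 \<in> C1" "xc C1 \<notin> G" using xc[OF c(1)] by auto
      have x2: "xc C2 \<in> C2" "xc C2 \<notin> G" using xc[OF c(2)] by auto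
      have "f (xc C2) \<in> phi C1" using c(3) ccomp_self unfolding phi_def by metis
      then have "(f (xc C1), f (xc C2)) \<in> (cayley_edges_minus Y F')\<^sup>*"
        unfolding phi_def ccomp_def by blast
      then have "(g (f (xc C1)), g (f (xc C2))) \<in> (cayley_edges_minus X F)\<^sup>*" by (rule pull)
      then have p: "(xc C1, xc C2) \<in> (cayley_edges_minus X F)\<^sup>*"
        using conn1[OF x1(2)] conn2[OF x2(2)] by (meson rtrancl_trans)
      obtain m1 where m1: "C1 = ccomp X F m1" using c(1) components_alt unfolding SM_def by blast
      obtain m2 where m2: "C2 = ccomp X F m2" using c(2) components_alt unfolding SM_def by blast
      have "C1 = ccomp X F (xc C1)" using m1 x1(1) ccomp_eq unfolding ccomp_def by blast
      moreover have "C2 = ccomp X F (xc C2)" using m2 x2(1) ccomp_eq unfolding ccomp_def by blast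
      ultimately show "C1 = C2" using ccomp_eq[OF p] by simp
    qed
    have fSM: "finite SM" unfolding SM_def using finite_components[OF fX gX fG] fF
      finite_components[OF fX gX fF] by simp
    show ?thesis
    proof (cases "finite SN")
      case True
      have "card SM \<le> card SN" using card_inj_on_le[OF inj] phiN True by blast
      then show ?thesis using fSM True unfolding num_inf_components_def Let_def SM_def SN_def F'_def
        by simp
    next
      case False
      then show ?thesis unfolding num_inf_components_def Let_def SN_def F'_def by simp
    qed
  qed
  show ?thesis unfolding num_ends_def
  proof (rule SUP_mono)
    fix F :: "'a set" assume "F \<in> {F. finite F}"
    then show "\<exists>F'\<in>{F :: 'b set. finite F}. num_inf_components X F \<le> num_inf_components Y F'"
      using main finite_oball[OF fY] by blast
  qed
qed


lemma wdist_le_iff: "wdist X x y \<le> enat r \<longleftrightarrow> reach X x y r"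
proof
  assume "reach X x y r"
  then obtain w where w: "set w \<subseteq> X" "length w \<le> r" "y = x * prod_list w"
    unfolding reach_def by blast
  then have "wdist X x y \<le> enat (length w)" unfolding wdist_def by (intro Inf_lower) blast
  then show "wdist X x y \<le> enat r" using w(2) by (meson enat_ord_simps(1) order_trans)
next
  let ?S = "{enat (length w) | w. set w \<subseteq> X \<and> x * prod_list w = y}"
  assume a: "wdist X x y \<le> enat r"
  have "?S \<noteq> {}"
  proof
    assume "?S = {}"
    then have "wdist X x y = \<infinity>" unfolding wdist_def by (simp add: Inf_enat_def)
    then show False using a by simp
  qed
  then obtain e where e: "e \<in> ?S" by blast
  have "(LEAST z. z \<in> ?S) \<in> ?S" by (rule LeastI[of "\<lambda>z. z \<in> ?S" e]) (fact e)
  then have "Inf ?S \<in> ?S" using \<open>?S \<noteq> {}\<close> by (simp only: Inf_enat_def if_False)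
  then have "wdist X x y \<in> ?S" unfolding wdist_def .
  then show "reach X x y r" using a unfolding reach_def by auto
qed

lemma ereal_le_nat: "ereal_of_enat d \<le> ereal c \<Longrightarrow> d \<le> enat (nat \<lfloor>c\<rfloor>)"
proof (cases d)
  case (enat k)
  assume "ereal_of_enat d \<le> ereal c"
  then have "real k \<le> c" using enat by simp
  then have "k \<le> nat \<lfloor>c\<rfloor>" by (simp add: le_nat_floor)
  then show ?thesis using enat by simp
next
  case infinity
  assume "ereal_of_enat d \<le> ereal c"
  then show ?thesis using infinity by simp
qed

lemma fin_dist: "wdist X x y \<le> enat r \<Longrightarrow> \<exists>k. wdist X x y = enat k \<and> k \<le> r"
  by (cases "wdist X x y") auto


theorem theorem7p2:
  fixes X :: "'a::monoid_mult set" and Y :: "'b::monoid_mult set"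
  assumes "finite X" and "generates X"
    and "finite Y" and "generates Y"
    and "quasi_isometric X Y"
  shows "num_ends X = num_ends Y"
proof -
  obtain f where "quasi_isometry X Y f" using assms(5) unfolding quasi_isometric_def by blast
  then obtain lam eps mu :: real where lam: "1 \<le> lam" and eps: "0 < eps" and mu: "0 \<le> mu"
    and QQ: "\<forall>x y. ereal (1 / lam) * ereal_of_enat (wdist X x y) - ereal eps
                 \<le> ereal_of_enat (wdist Y (f x) (f y))
             \<and> ereal_of_enat (wdist Y (f x) (f y))
                 \<le> ereal lam * ereal_of_enat (wdist X x y) + ereal eps"
    and SS: "\<forall>n. \<exists>x. max (ereal_of_enat (wdist Y n (f x))) (ereal_of_enat (wdist Y (f x) n))
                  \<le> ereal mu"
    unfolding quasi_isometry_def by (elim exE conjE) (rule that; assumption)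
  note Q = QQ[rule_format] and S = SS[rule_format]
  have QU: "reach Y (f x) (f y) (nat \<lfloor>lam * real r + eps\<rfloor>)" if "reach X x y r" for x y r
  proof -
    have "wdist X x y \<le> enat r" using that wdist_le_iff by blast
    then obtain k where k: "wdist X x y = enat k" "k \<le> r" using fin_dist by blast
    have q: "ereal_of_enat (wdist Y (f x) (f y)) \<le> ereal lam * ereal_of_enat (wdist X x y) + ereal eps"
      using Q[of x y] by (rule conjunct2)
    have "ereal_of_enat (wdist Y (f x) (f y)) \<le> ereal (lam * real k + eps)"
      using q unfolding k(1) by simp
    also have "\<dots> \<le> ereal (lam * real r + eps)" using k lam by simp
    finally show ?thesis using ereal_le_nat wdist_le_iff by blast
  qed
  have QL: "reach X x y (nat \<lfloor>lam * (real r + eps)\<rfloor>)" if "reach Y (f x) (f y) r" for x y r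
  proof -
    have "wdist Y (f x) (f y) \<le> enat r" using that wdist_le_iff by blast
    then obtain k where k: "wdist Y (f x) (f y) = enat k" "k \<le> r" using fin_dist by blast
    have q: "ereal (1 / lam) * ereal_of_enat (wdist X x y) - ereal eps \<le> ereal_of_enat (wdist Y (f x) (f y))"
      using Q[of x y] by (rule conjunct1)
    have l: "ereal (1 / lam) * ereal_of_enat (wdist X x y) - ereal eps \<le> ereal (real k)"
      using q unfolding k(1) by simp
    have "wdist X x y \<noteq> \<infinity>"
    proof
      assume "wdist X x y = \<infinity>"
      then show False using l lam by simp
    qed
    then obtain j where j: "wdist X x y = enat j" by auto
    have "(1/lam) * real j - eps \<le> real k" using l j by simp
    then have "real j \<le> lam * (real k + eps)" using lam by (simp add: field_simps)
    also have "\<dots> \<le> lam * (real r + eps)" using k lam by simp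
    finally have "ereal_of_enat (wdist X x y) \<le> ereal (lam * (real r + eps))" using j by simp
    then show ?thesis using ereal_le_nat wdist_le_iff by blast
  qed
  define m where "m = nat \<lfloor>mu\<rfloor>"
  have QS: "\<exists>x. reach Y n (f x) m \<and> reach Y (f x) n m" for n
  proof -
    obtain x where "max (ereal_of_enat (wdist Y n (f x))) (ereal_of_enat (wdist Y (f x) n)) \<le> ereal mu"
      using S by blast
    then show ?thesis unfolding m_def using ereal_le_nat wdist_le_iff by (metis max.bounded_iff)
  qed
  define g where "g n = (SOME x. reach Y n (f x) m \<and> reach Y (f x) n m)" for n
  have gs: "reach Y n (f (g n)) m \<and> reach Y (f (g n)) n m" for n
    unfolding g_def using QS by (rule someI_ex)
  define c1 where "c1 = nat \<lfloor>lam * real (1::nat) + eps\<rfloor>"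
  define c2 where "c2 = nat \<lfloor>lam * (real (m+1+m) + eps)\<rfloor>"
  define c3 where "c3 = nat \<lfloor>lam * (real m + eps)\<rfloor>"
  define K where "K = max c1 (max c2 (max c3 m))"
  have Kb: "c1 \<le> K" "c2 \<le> K" "c3 \<le> K" "m \<le> K" unfolding K_def by auto
  have H1: "reach Y (f x) (f (x*a)) K" if "a \<in> X" for x a
    using reach_mono[OF QU[OF reach_gen[OF that]]] Kb(1) unfolding c1_def[symmetric] by blast
  have H2: "reach X (g n) (g (n*b)) K" if "b \<in> Y" for n b
  proof -
    have "reach Y (f (g n)) (f (g (n*b))) (m+1+m)"
      using gs[of n] gs[of "n*b"] reach_gen[OF that, of n] reach_trans by blast
    then have "reach X (g n) (g (n*b)) c2" unfolding c2_def by (rule QL)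
    then show ?thesis using reach_mono Kb(2) by blast
  qed
  have H3a: "reach X x (g (f x)) K" for x
  proof -
    have "reach X x (g (f x)) c3" unfolding c3_def using gs[of "f x"] QL by blast
    then show ?thesis using reach_mono Kb(3) by blast
  qed
  have H3b: "reach X (g (f x)) x K" for x
  proof -
    have "reach X (g (f x)) x c3" unfolding c3_def using gs[of "f x"] QL by blast
    then show ?thesis using reach_mono Kb(3) by blast
  qed
  have H4a: "reach Y (f (g n)) n K" for n
    using gs[of n] reach_mono Kb(4) by blast
  have H4b: "reach Y n (f (g n)) K" for n
    using gs[of n] reach_mono Kb(4) by blast
  have "num_ends X \<le> num_ends Y"
    by (rule core[OF assms(1,2,3), of f K g]) (use H1 H2 H3a H3b H4a in auto)
  moreover have "num_ends Y \<le> num_ends X"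
    by (rule core[OF assms(3,4,1), of g K f]) (use H1 H2 H3b H4a H4b in auto)
  ultimately show ?thesis by simp
qed

end
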